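(* Let $W:\mathbb{R}\to\mathbb{R}$ be a bounded, monotone (nondecreasing) solution of $W=\mathcal{A}\Phi'(\mathcal{A}W)$ with $W(\varphi)\to\pm1$ as $\varphi\to\pm\infty$, and set $\widetilde W=W_{\rm sh}-W$. Then for all $\underline\tau,\overline\tau$ with $\underline\tau<\tau_+<\overline\tau$ there exist positive constants $\underline c,\overline c$ such that $$\underline c\,e^{-\overline\tau\varphi}\le\widetilde W(\varphi)\le\overline c\,e^{-\underline\tau\varphi}\qquad\text{for all }\varphi\ge0.$$
   Context: $\Phi:\mathbb{R}\to\mathbb{R}$ is twice continuously differentiable on $[-1,1]$ with $\Phi'(-1)=-1$, $\Phi'(1)=1$, $\Phi''\ge0$ on $[-1,1]$, $\Phi(-1)=\Phi(1)$, $\Phi''(-1)<1$, and $\lambda_+:=\Phi''(1)\in(0,1)$. $(\mathcal{A}U)(\varphi)=\int_{\varphi-1/2}^{\varphi+1/2}U(s)\,ds$; $W_{\rm sh}(\varphi)=\mathrm{sgn}(\varphi)$. $\tau_+>0$ denotes the unique positive real solution of $\tau^2=2\lambda_+(\cosh\tau-1)$. *)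

theory Defs
  imports "HOL-Analysis.Analysis"
begin

definition avgA :: "(real \<Rightarrow> real) \<Rightarrow> real \<Rightarrow> real" where
  "avgA U \<phi> = integral {\<phi> - 1/2 .. \<phi> + 1/2} U"

text \<open>The shock profile W_sh = sgn; at the single point 0 we use the value 1
  (the statement concerns the half-line phi >= 0).\<close>
definition Wsh :: "real \<Rightarrow> real" where
  "Wsh \<phi> = (if \<phi> \<ge> 0 then 1 else -1)"

end

theory Submission
  imports Defs "HOL-Real_Asymp.Real_Asymp"
begin


lemma av_const: "avgA (\<lambda>_. c) \<phi> = c"
  unfolding avgA_def by simp

lemma av_le:
  assumes "f integrable_on {\<phi>-1/2..\<phi>+1/2}" "g integrable_on {\<phi>-1/2..\<phi>+1/2}"
    "\<And>s. s \<in> {\<phi>-1/2..\<phi>+1/2} \<Longrightarrow> f s \<le> g s"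
  shows "avgA f \<phi> \<le> avgA g \<phi>"
  unfolding avgA_def using assms by (rule integral_le)

lemma av_ub:
  assumes "f integrable_on {\<phi>-1/2..\<phi>+1/2}" "\<And>s. s \<in> {\<phi>-1/2..\<phi>+1/2} \<Longrightarrow> f s \<le> M"
  shows "avgA f \<phi> \<le> M"
  using av_le[of f \<phi> "\<lambda>_. M"] assms av_const[of M \<phi>] by auto

lemma av_lb:
  assumes "f integrable_on {\<phi>-1/2..\<phi>+1/2}" "\<And>s. s \<in> {\<phi>-1/2..\<phi>+1/2} \<Longrightarrow> M \<le> f s"
  shows "M \<le> avgA f \<phi>"
  using av_le[of "\<lambda>_. M" \<phi> f] assms av_const[of M \<phi>] by auto

lemma int_bound:
  fixes f :: "real \<Rightarrow> real"
  assumes "f integrable_on {a..b}" "a \<le> b" "\<And>t. t \<in> {a..b} \<Longrightarrow> \<bar>f t\<bar> \<le> B"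
  shows "\<bar>integral {a..b} f\<bar> \<le> B * (b - a)"
proof -
  have bb: "\<And>t. t \<in> {a..b} \<Longrightarrow> -B \<le> f t \<and> f t \<le> B" using assms(3) by (force simp: abs_le_iff)
  have "integral {a..b} f \<le> integral {a..b} (\<lambda>_. B)"
    by (rule integral_le) (use assms(1) bb in auto)
  moreover have "integral {a..b} (\<lambda>_. -B) \<le> integral {a..b} f"
    by (rule integral_le) (use assms(1) bb in auto)
  ultimately show ?thesis using assms(2) by (auto simp: abs_le_iff algebra_simps)
qed

lemma av_lip:
  fixes f :: "real \<Rightarrow> real"
  assumes int: "\<And>a b. f integrable_on {a..b}"
    and bd: "\<And>t. t \<in> {x-1/2..y+1/2} \<Longrightarrow> \<bar>f t\<bar> \<le> B" and xy: "x \<le> y"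
  shows "\<bar>avgA f y - avgA f x\<bar> \<le> 2*B*(y-x)"
proof -
  have e1: "integral {x-1/2..x+1/2} f + integral {x+1/2..y+1/2} f = integral {x-1/2..y+1/2} f"
    by (rule Henstock_Kurzweil_Integration.integral_combine) (use xy int in auto)
  have e2: "integral {x-1/2..y-1/2} f + integral {y-1/2..y+1/2} f = integral {x-1/2..y+1/2} f"
    by (rule Henstock_Kurzweil_Integration.integral_combine) (use xy int in auto)
  have b1: "\<bar>integral {x+1/2..y+1/2} f\<bar> \<le> B * ((y+1/2) - (x+1/2))"
    by (rule int_bound) (use xy int bd in auto)
  then have b1: "\<bar>integral {x+1/2..y+1/2} f\<bar> \<le> B * (y - x)" by simp
  have b2: "\<bar>integral {x-1/2..y-1/2} f\<bar> \<le> B * ((y-1/2) - (x-1/2))"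
    by (rule int_bound) (use xy int bd in auto)
  then have b2: "\<bar>integral {x-1/2..y-1/2} f\<bar> \<le> B * (y - x)" by simp
  have "avgA f y - avgA f x = integral {x+1/2..y+1/2} f - integral {x-1/2..y-1/2} f"
    unfolding avgA_def using e1 e2 by linarith
  then show ?thesis using b1 b2 by (simp only: abs_le_iff) linarith
qed

lemma av_lip_cont:
  fixes f :: "real \<Rightarrow> real"
  assumes int: "\<And>a b. f integrable_on {a..b}"
    and bd: "\<And>x0. \<exists>B. \<forall>t\<in>{x0-2..x0+2}. \<bar>f t\<bar> \<le> B"
  shows "continuous_on UNIV (avgA f)"
proof -
  have "isCont (avgA f) x0" for x0
  proof -
    obtain B where B: "\<forall>t\<in>{x0-2..x0+2}. \<bar>f t\<bar> \<le> B" using bd by blast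
    have L: "\<bar>avgA f x - avgA f x0\<bar> \<le> 2*B*\<bar>x-x0\<bar>" if "\<bar>x - x0\<bar> \<le> 1" for x
    proof (cases "x \<le> x0")
      case True
      have "\<bar>avgA f x0 - avgA f x\<bar> \<le> 2*B*(x0-x)"
        by (rule av_lip[OF int]) (use B True that in auto)
      then show ?thesis using True by (simp add: abs_minus_commute)
    next
      case False
      have "\<bar>avgA f x - avgA f x0\<bar> \<le> 2*B*(x-x0)"
        by (rule av_lip[OF int]) (use B False that in auto)
      then show ?thesis using False by simp
    qed
    have B0: "B \<ge> 0" using B[rule_format, of x0] by auto
    show ?thesis unfolding isCont_def LIM_eq
    proof (intro allI impI)
      fix r :: real assume r: "r > 0"
      show "\<exists>s>0. \<forall>x. x \<noteq> x0 \<and> norm (x - x0) < s \<longrightarrow> norm (avgA f x - avgA f x0) < r"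
      proof (intro exI[of _ "min 1 (r/(2*B+1))"] conjI allI impI)
        show "min 1 (r/(2*B+1)) > 0" using r B0 by auto
        fix x assume "x \<noteq> x0 \<and> norm (x - x0) < min 1 (r/(2*B+1))"
        then have h1: "\<bar>x-x0\<bar> \<le> 1" and h2: "\<bar>x-x0\<bar> < r/(2*B+1)" by auto
        have "2*B*\<bar>x-x0\<bar> \<le> (2*B+1)*\<bar>x-x0\<bar>" by (simp add: mult_right_mono)
        also have "\<dots> < (2*B+1) * (r/(2*B+1))" using h2 B0 by (intro mult_strict_left_mono) auto
        also have "\<dots> = r" using B0 by simp
        finally show "norm (avgA f x - avgA f x0) < r" using L[OF h1] by simp
      qed
    qed
  qed
  then show ?thesis by (simp add: continuous_at_imp_continuous_on)
qed

lemma av_cont: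
  fixes f :: "real \<Rightarrow> real"
  assumes "continuous_on UNIV f"
  shows "continuous_on UNIV (avgA f)"
proof (rule av_lip_cont)
  show "f integrable_on {a..b}" for a b
    by (rule integrable_continuous_interval) (use assms continuous_on_subset in blast)
  fix x0 :: real
  have "compact (f ` {x0-2..x0+2})"
    by (rule compact_continuous_image) (use assms continuous_on_subset in auto)
  then obtain B where "\<forall>y\<in>f ` {x0-2..x0+2}. norm y \<le> B"
    using compact_imp_bounded bounded_iff by metis
  then show "\<exists>B. \<forall>t\<in>{x0-2..x0+2}. \<bar>f t\<bar> \<le> B" by auto
qed



lemma cont_int: "continuous_on UNIV (f::real\<Rightarrow>real) \<Longrightarrow> f integrable_on {a..b}"
  by (rule integrable_continuous_interval) (use continuous_on_subset in blast)

lemma av_diff: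
  assumes "continuous_on UNIV f" "continuous_on UNIV g"
  shows "avgA (\<lambda>s. f s - g s) \<phi> = avgA f \<phi> - avgA g \<phi>"
  unfolding avgA_def by (rule integral_diff) (use assms cont_int in auto)

lemma av_cmult: "avgA (\<lambda>s. c * f s) \<phi> = c * avgA f \<phi>"
  unfolding avgA_def using integral_cmul[where c=c and f=f and S="{\<phi>-1/2..\<phi>+1/2}"] by simp

definition kap :: "real \<Rightarrow> real" where "kap t = (exp (t/2) - exp (-t/2)) / t"

lemma av_exp:
  assumes "t \<noteq> 0"
  shows "avgA (\<lambda>s. exp (-t* s)) \<phi> = kap t * exp (-t*\<phi>)"
proof -
  have "((\<lambda>s. exp (-t* s)) has_integral ((- exp (-t*(\<phi>+1/2))/t) - (- exp (-t*(\<phi>-1/2))/t))) {\<phi>-1/2..\<phi>+1/2}"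
  proof (rule fundamental_theorem_of_calculus)
    fix x assume "x \<in> {\<phi>-1/2..\<phi>+1/2}"
    have "((\<lambda>s. - exp (-t* s)/t) has_real_derivative exp (-t*x)) (at x within {\<phi>-1/2..\<phi>+1/2})"
      by (rule derivative_eq_intros refl | use assms in simp)+
    then show "((\<lambda>s. - exp (-t* s)/t) has_vector_derivative exp (-t*x)) (at x within {\<phi>-1/2..\<phi>+1/2})"
      by (simp add: has_real_derivative_iff_has_vector_derivative)
  qed simp
  then have "avgA (\<lambda>s. exp (-t* s)) \<phi> = (- exp (-t*(\<phi>+1/2))/t) - (- exp (-t*(\<phi>-1/2))/t)"
    unfolding avgA_def by (rule integral_unique)
  also have "\<dots> = kap t * exp (-t*\<phi>)"
  proof -
    have a: "exp (-t*(\<phi>+1/2)) = exp (-t*\<phi>) * exp (-t/2)" by (simp add: exp_add[symmetric] algebra_simps)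
    have b: "exp (-t*(\<phi>-1/2)) = exp (-t*\<phi>) * exp (t/2)" by (simp add: exp_add[symmetric] algebra_simps)
    show ?thesis unfolding kap_def a b using assms by (simp add: field_simps)
  qed
  finally show ?thesis .
qed



lemma kap_pos: "t > 0 \<Longrightarrow> kap t > 0"
  unfolding kap_def by (auto intro!: divide_pos_pos)

lemma kap_sq: "t \<noteq> 0 \<Longrightarrow> (kap t)^2 = 2*(cosh t - 1)/t^2"
proof -
  assume t: "t \<noteq> 0"
  have a: "exp (t/2) * exp (t/2) = exp t" by (simp add: exp_add[symmetric])
  have b: "exp (-t/2) * exp (-t/2) = exp (-t)" by (simp add: exp_add[symmetric])
  have c: "exp (t/2) * exp (-t/2) = 1" by (simp add: exp_add[symmetric])
  have "(exp (t/2) - exp (-t/2))^2 = exp t + exp (-t) - 2"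
    unfolding power2_eq_square using a b c by (simp add: algebra_simps)
  then show ?thesis unfolding kap_def cosh_def using t by (simp add: power_divide field_simps)
qed

definition NN :: "real \<Rightarrow> real" where
  "NN x = x * (exp (x/2) + exp (-x/2)) - 2 * (exp (x/2) - exp (-x/2))"

lemma NN_deriv: "(NN has_real_derivative x * (exp (x/2) - exp (-x/2)) / 2) (at x)"
  unfolding NN_def
  by (auto intro!: derivative_eq_intros simp: field_simps)

lemma NN_pos: "x > 0 \<Longrightarrow> NN x > 0"
proof -
  assume x: "x > 0"
  have "NN 0 < NN x"
  proof (rule DERIV_pos_imp_increasing_open[OF x])
    fix y :: real assume y: "0 < y" "y < x"
    have "exp (-y/2) < exp (y/2)" using y by simp
    then have "y * (exp (y/2) - exp (-y/2)) / 2 > 0" using y by simp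
    then show "\<exists>d. (NN has_real_derivative d) (at y) \<and> d > 0" using NN_deriv by blast
  next
    show "continuous_on {0..x} NN" unfolding NN_def by (intro continuous_intros) auto
  qed
  then show ?thesis by (simp add: NN_def)
qed

lemma kap_deriv: "x \<noteq> 0 \<Longrightarrow> (kap has_real_derivative NN x / (2 * x^2)) (at x)"
proof -
  assume x: "x \<noteq> 0"
  have "((\<lambda>x. (exp (x/2) - exp (-x/2)) / x) has_real_derivative NN x / (2 * x^2)) (at x)"
    using x by (auto intro!: derivative_eq_intros simp: NN_def field_simps power2_eq_square)
  then show ?thesis by (simp add: kap_def[abs_def])
qed

lemma kap_mono: "0 < a \<Longrightarrow> a < b \<Longrightarrow> kap a < kap b"
proof -
  assume a: "0 < a" and ab: "a < b"
  show "kap a < kap b"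
  proof (rule DERIV_pos_imp_increasing_open[OF ab])
    fix y :: real assume y: "a < y" "y < b"
    then have "y > 0" using a by simp
    then show "\<exists>d. (kap has_real_derivative d) (at y) \<and> d > 0"
      using kap_deriv[of y] NN_pos[of y] by (intro exI[of _ "NN y / (2 * y^2)"]) auto
  next
    have "\<forall>y\<in>{a..b}. isCont kap y" using a kap_deriv DERIV_isCont
      by (metis atLeastAtMost_iff less_le_trans order.strict_iff_not)
    then show "continuous_on {a..b} kap" by (simp add: continuous_at_imp_continuous_on)
  qed
qed



lemma mp:
  fixes z :: "real \<Rightarrow> real"
  assumes zc: "continuous_on UNIV z" and zl: "(z \<longlongrightarrow> l) at_top" and l: "l \<le> 0"
    and th: "0 \<le> \<theta>" "\<theta> < 1"
    and base: "\<And>\<phi>. \<phi> \<in> {R-1..R+1} \<Longrightarrow> z \<phi> \<le> 0"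
    and ineq: "\<And>\<phi>. \<phi> \<ge> R+1 \<Longrightarrow> z \<phi> \<le> \<theta> * avgA (avgA z) \<phi>"
    and x: "x \<ge> R-1"
  shows "z x \<le> 0"
proof (rule ccontr)
  assume "\<not> z x \<le> 0" then have zx: "z x > 0" by simp
  have "eventually (\<lambda>y. z y < z x) at_top" using order_tendstoD(2)[OF zl] l zx by simp
  then obtain T0 where T0: "\<And>y. y \<ge> T0 \<Longrightarrow> z y < z x" by (auto simp: eventually_at_top_linorder)
  define T where "T = max T0 x"
  obtain p where p: "p \<in> {R-1..T}" "\<And>y. y\<in>{R-1..T} \<Longrightarrow> z y \<le> z p"
  proof -
    have "continuous_on {R-1..T} z" using zc continuous_on_subset by blast
    moreover have "{R-1..T} \<noteq> {}" using x T_def by auto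
    ultimately obtain p where "p \<in> {R-1..T}" "\<forall>y\<in>{R-1..T}. z y \<le> z p"
      using continuous_attains_sup[of "{R-1..T}" z] by blast
    then show ?thesis using that by blast
  qed
  have xin: "x \<in> {R-1..T}" using x T_def by auto
  have M: "z y \<le> z p" if "y \<ge> R-1" for y
  proof (cases "y \<le> T")
    case True then show ?thesis using p that by auto
  next
    case False then have "y \<ge> T0" using T_def by auto
    then show ?thesis using T0 p(2)[OF xin] by fastforce
  qed
  have zp: "z p > 0" using zx p(2)[OF xin] by simp
  have p1: "p > R+1"
  proof (rule ccontr)
    assume "\<not> p > R+1" then have "p \<in> {R-1..R+1}" using p(1) by auto
    then show False using base zp by fastforce
  qed
  have azc: "continuous_on UNIV (avgA z)" using av_cont[OF zc] .
  have "avgA (avgA z) p \<le> z p"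
  proof (rule av_ub)
    show "avgA z integrable_on {p - 1/2..p + 1/2}" using cont_int[OF azc] .
    fix s assume s: "s \<in> {p-1/2..p+1/2}"
    show "avgA z s \<le> z p"
    proof (rule av_ub)
      show "z integrable_on {s - 1/2..s + 1/2}" using cont_int[OF zc] .
      fix t assume "t \<in> {s-1/2..s+1/2}"
      then have "t \<ge> R-1" using s p1 by auto
      then show "z t \<le> z p" using M by blast
    qed
  qed
  then have "\<theta> * avgA (avgA z) p \<le> \<theta> * z p" using th by (intro mult_left_mono) auto
  also have "\<dots> < z p" using th zp by simp
  finally show False using ineq[of p] p1 by simp
qed

lemma av_pos:
  fixes f :: "real \<Rightarrow> real"
  assumes fc: "continuous_on UNIV f" and nn: "\<And>s. s \<in> {\<phi>-1/2..\<phi>+1/2} \<Longrightarrow> f s \<ge> 0"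
    and c: "c \<in> {\<phi>-1/2..\<phi>+1/2}" "f c > 0"
  shows "avgA f \<phi> > 0"
proof -
  have "isCont f c" using fc by (simp add: continuous_on_eq_continuous_at)
  then obtain d where d: "d > 0" "\<And>y. y \<noteq> c \<and> norm (y - c) < d \<Longrightarrow> norm (f y - f c) < f c / 2"
  proof -
    have "f c / 2 > 0" using c(2) by simp
    then show ?thesis using \<open>isCont f c\<close> that unfolding isCont_def LIM_eq by blast
  qed
  define c1 where "c1 = max (\<phi>-1/2) (c - d/2)"
  define c2 where "c2 = min (\<phi>+1/2) (c + d/2)"
  have c12: "c1 < c2" using c d unfolding c1_def c2_def by (simp add: max_def min_def)
  have sub: "{c1..c2} \<subseteq> {\<phi>-1/2..\<phi>+1/2}" unfolding c1_def c2_def by auto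
  have lb: "f y \<ge> f c / 2" if "y \<in> {c1..c2}" for y
  proof (cases "y = c")
    case True then show ?thesis using c by simp
  next
    case False
    have "norm (y - c) < d" using that d unfolding c1_def c2_def by auto
    then have "norm (f y - f c) < f c / 2" using d(2) False by blast
    then show ?thesis unfolding real_norm_def abs_less_iff by linarith
  qed
  have "integral {c1..c2} (\<lambda>_. f c / 2) \<le> integral {c1..c2} f"
    by (rule integral_le) (use cont_int[OF fc] lb in auto)
  then have "(c2 - c1) * (f c / 2) \<le> integral {c1..c2} f" using c12 by simp
  moreover have "(c2 - c1) * (f c / 2) > 0" using c12 c by simp
  moreover have "integral {c1..c2} f \<le> integral {\<phi>-1/2..\<phi>+1/2} f"
    by (rule integral_subset_le[OF sub]) (use cont_int[OF fc] nn in auto)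
  ultimately show ?thesis unfolding avgA_def by linarith
qed



lemma deriv_bound:
  fixes f :: "real \<Rightarrow> real"
  assumes d: "(f has_real_derivative L) (at 1 within {-1..1})" and f1: "f 1 = 1" and e: "e > 0"
  shows "\<exists>\<delta>>0. \<delta> \<le> 1 \<and> (\<forall>x. 0 \<le> x \<and> x \<le> \<delta> \<longrightarrow> \<bar>(1 - f (1-x)) - L*x\<bar> \<le> e*x)"
proof -
  have "((\<lambda>y. (f y - f 1) / (y - 1)) \<longlongrightarrow> L) (at 1 within {-1..1})"
    using d has_field_derivative_iff by blast
  then have "eventually (\<lambda>y. dist ((f y - f 1) / (y - 1)) L < e) (at 1 within {-1..1})"
    using e tendstoD by blast
  then obtain d where d: "d > 0" "\<And>y. y \<in> {-1..1} \<Longrightarrow> y \<noteq> 1 \<and> dist y 1 < d \<Longrightarrow> dist ((f y - f 1) / (y - 1)) L < e"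
    unfolding eventually_at by blast
  show ?thesis
  proof (intro exI[of _ "min (d/2) 1"] conjI allI impI)
    show "min (d/2) 1 > 0" "min (d/2) 1 \<le> 1" using d by auto
    fix x :: real assume x: "0 \<le> x \<and> x \<le> min (d/2) 1"
    show "\<bar>(1 - f (1-x)) - L*x\<bar> \<le> e*x"
    proof (cases "x = 0")
      case True then show ?thesis using f1 by simp
    next
      case False
      then have xp: "x > 0" using x by simp
      have "dist ((f (1-x) - f 1) / ((1-x) - 1)) L < e"
        by (rule d(2)) (use x xp d in \<open>auto simp: dist_real_def\<close>)
      then have "\<bar>(1 - f (1-x)) / x - L\<bar> < e" using f1 by (simp add: dist_real_def minus_divide_left)
      then have "\<bar>((1 - f (1-x)) / x - L) * x\<bar> \<le> e * x" using xp
        by (simp add: abs_mult)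
      moreover have "((1 - f (1-x)) / x - L) * x = (1 - f (1-x)) - L*x" using xp by (simp add: field_simps)
      ultimately show ?thesis by simp
    qed
  qed
qed

lemma av_S:
  assumes "t \<noteq> 0"
  shows "avgA (\<lambda>s. C * exp (-t * s) + \<eta>) \<phi> = (C * kap t) * exp (-t * \<phi>) + \<eta>"
proof -
  have "avgA (\<lambda>s. C * exp (-t * s) - (-\<eta>)) \<phi> = avgA (\<lambda>s. C * exp (-t * s)) \<phi> - avgA (\<lambda>_. -\<eta>) \<phi>"
    by (rule av_diff) (auto intro!: continuous_intros)
  also have "\<dots> = C * (kap t * exp (-t * \<phi>)) + \<eta>" using av_cmult av_exp[OF assms] av_const by simp
  finally show ?thesis by simp
qed



theorem lemma4p1:
  fixes Phi Phi' Phi'' W :: "real \<Rightarrow> real"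
    and lam tau_plus tau_lo tau_hi :: real
  assumes d1: "\<And>x. x \<in> {-1..1} \<Longrightarrow> (Phi has_real_derivative Phi' x) (at x within {-1..1})"
    and d2: "\<And>x. x \<in> {-1..1} \<Longrightarrow> (Phi' has_real_derivative Phi'' x) (at x within {-1..1})"
    and c2: "continuous_on {-1..1} Phi''"
    and "Phi' (-1) = -1" and "Phi' 1 = 1"
    and "\<And>x. x \<in> {-1..1} \<Longrightarrow> Phi'' x \<ge> 0"
    and "Phi (-1) = Phi 1"
    and "Phi'' (-1) < 1"
    and lam_def: "lam = Phi'' 1" and "0 < lam" and "lam < 1"
    and tau_pos: "tau_plus > 0"
    and tau_eq: "tau_plus\<^sup>2 = 2 * lam * (cosh tau_plus - 1)"
    and Wbdd: "bounded (range W)"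
    and Wmono: "mono W"
    and Wsol: "\<And>\<phi>. W \<phi> = avgA (\<lambda>s. Phi' (avgA W s)) \<phi>"
    and Wtop: "(W \<longlongrightarrow> 1) at_top"
    and Wbot: "(W \<longlongrightarrow> -1) at_bot"
    and taus: "tau_lo < tau_plus" "tau_plus < tau_hi"
  shows "\<exists>c_lo c_hi. c_lo > 0 \<and> c_hi > 0 \<and>
           (\<forall>\<phi>\<ge>0. c_lo * exp (- tau_hi * \<phi>) \<le> Wsh \<phi> - W \<phi> \<and>
                    Wsh \<phi> - W \<phi> \<le> c_hi * exp (- tau_lo * \<phi>))"
proof -
  note P1 = \<open>Phi' 1 = 1\<close> and Ppos = \<open>\<And>x. x \<in> {-1..1} \<Longrightarrow> Phi'' x \<ge> 0\<close>
  note lam0 = \<open>0 < lam\<close> and lam1 = \<open>lam < 1\<close>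
  have Wle: "W x \<le> 1" for x
  proof (rule tendsto_lowerbound[OF Wtop])
    show "eventually (\<lambda>y. W x \<le> W y) at_top"
      unfolding eventually_at_top_linorder using monoD[OF Wmono] by blast
  qed simp
  have Wge: "-1 \<le> W x" for x
  proof (rule tendsto_upperbound[OF Wbot])
    show "eventually (\<lambda>y. W y \<le> W x) at_bot"
      unfolding eventually_at_bot_linorder using monoD[OF Wmono] by blast
  qed simp
  have Wint: "W integrable_on {a..b}" for a b
    by (rule integrable_on_mono_on) (rule mono_imp_mono_on[OF Wmono])
  have AWc: "continuous_on UNIV (avgA W)"
  proof (rule av_lip_cont[OF Wint])
    fix x0 :: real show "\<exists>B. \<forall>t\<in>{x0-2..x0+2}. \<bar>W t\<bar> \<le> B"
      using Wle Wge by (intro exI[of _ 1]) (auto simp: abs_le_iff)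
  qed
  have AWle: "avgA W s \<le> 1" for s by (rule av_ub) (use Wint Wle in auto)
  have AWge: "-1 \<le> avgA W s" for s by (rule av_lb) (use Wint Wge in auto)
  have Pc: "continuous_on {-1..1} Phi'"
    unfolding continuous_on_eq_continuous_within using d2 DERIV_continuous by metis
  define P where "P s = Phi' (avgA W s)" for s
  have PC: "continuous_on UNIV P"
    unfolding P_def by (rule continuous_on_compose2[OF Pc AWc]) (use AWle AWge in auto)
  have Ple1: "Phi' y \<le> 1" if y: "y \<in> {-1..1}" for y
  proof (cases "y = 1")
    case True then show ?thesis using P1 by simp
  next
    case False
    have "Phi' y \<le> Phi' 1"
    proof (rule DERIV_nonneg_imp_increasing_open[of y 1])
      show "y \<le> 1" using y by simp
    next
      fix x assume x: "y < x" "x < 1"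
      then have xi: "x \<in> interior {-1..1::real}" using y by auto
      have "(Phi' has_real_derivative Phi'' x) (at x)"
      proof -
        have "x \<in> {-1..1}" using x y by simp
        then show ?thesis using d2[of x] at_within_interior[OF xi] by simp
      qed
      then show "\<exists>d. (Phi' has_real_derivative d) (at x) \<and> d \<ge> 0" using Ppos[of x] x y by auto
    next
      have "{y..1} \<subseteq> {-1..1}" using y by simp
      then show "continuous_on {y..1} Phi'" using Pc continuous_on_subset by blast
    qed
    then show ?thesis using P1 by simp
  qed
  have Ple: "P s \<le> 1" for s unfolding P_def using Ple1 AWle AWge by auto
  have Weq: "W = avgA P" using Wsol unfolding P_def by auto
  have WC: "continuous_on UNIV W" unfolding Weq by (rule av_cont[OF PC])
  define u where "u x = 1 - W x" for x
  have uC: "continuous_on UNIV u" unfolding u_def by (intro continuous_intros WC)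
  have u0: "u x \<ge> 0" for x using Wle[of x] u_def by simp
  have u2: "u x \<le> 2" for x using Wge[of x] u_def by simp
  have udec: "u y \<le> u x" if "x \<le> y" for x y using monoD[OF Wmono that] u_def by simp
  have utop: "(u \<longlongrightarrow> 0) at_top" unfolding u_def[abs_def] using tendsto_diff[OF tendsto_const Wtop, of 1] by simp
  have ubot: "(u \<longlongrightarrow> 2) at_bot" unfolding u_def[abs_def] using tendsto_diff[OF tendsto_const Wbot, of 1] by simp
  have AuC: "continuous_on UNIV (avgA u)" by (rule av_cont[OF uC])
  have Au_eq: "avgA u s = 1 - avgA W s" for s
    unfolding u_def[abs_def] using av_diff[OF continuous_on_const WC, of 1 s] av_const by simp
  define h where "h s = 1 - P s" for s
  have hC: "continuous_on UNIV h" unfolding h_def by (intro continuous_intros PC)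
  have h0: "h s \<ge> 0" for s using Ple[of s] h_def by simp
  have u_eq: "u \<phi> = avgA h \<phi>" for \<phi>
    unfolding h_def[abs_def] u_def using av_diff[OF continuous_on_const PC, of 1 \<phi>] av_const Weq by simp
  have h_eq: "h s = 1 - Phi' (1 - avgA u s)" for s unfolding h_def P_def Au_eq by simp
  have Au_le: "avgA u s \<le> u (s - 1/2)" for s
    by (rule av_ub) (use cont_int[OF uC] udec in auto)
  have Au_ge: "avgA u s \<ge> 0" for s
    by (rule av_lb) (use cont_int[OF uC] u0 in auto)
  have dlam: "(Phi' has_real_derivative lam) (at 1 within {-1..1})" using d2[of 1] lam_def by simp
  have upos: "u p > 0" for p
  proof (rule ccontr)
    assume "\<not> u p > 0" then have up: "u p = 0" using u0[of p] by simp
    obtain \<delta>0 where d0: "\<delta>0 > 0" "\<And>x. 0 \<le> x \<Longrightarrow> x \<le> \<delta>0 \<Longrightarrow> \<bar>(1 - Phi' (1-x)) - lam*x\<bar> \<le> (lam/2)*x"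
      using deriv_bound[OF dlam P1, of "lam/2"] lam0 by auto
    define S where "S = {x. u x > 0}"
    have "eventually (\<lambda>x. u x > 1) at_bot" using order_tendstoD(1)[OF ubot] by simp
    then obtain x1 where "u x1 > 1" by (auto simp: eventually_at_bot_linorder)
    then have Sne: "S \<noteq> {}" unfolding S_def using less_trans[OF zero_less_one] by blast
    have Sbd: "x < p" if "x \<in> S" for x
    proof (rule ccontr)
      assume "\<not> x < p" then have "u x \<le> u p" using udec by simp
      then show False using that up unfolding S_def by simp
    qed
    have Sba: "bdd_above S" using Sbd by (meson bdd_aboveI less_imp_le)
    define s0 where "s0 = Sup S"
    have below: "u x > 0" if "x < s0" for x
    proof -
      have "x < Sup S" using that s0_def by simp
      then obtain y where "y \<in> S" "x < y" using less_cSupE Sne by blast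
      then show ?thesis using udec[of x y] unfolding S_def by simp
    qed
    have us0: "u s0 = 0"
    proof (rule ccontr)
      assume "u s0 \<noteq> 0" then have pos: "u s0 > 0" using u0[of s0] by simp
      have "isCont u s0" using uC by (simp add: continuous_on_eq_continuous_at)
      then obtain d where d: "d > 0" "\<And>y. y \<noteq> s0 \<and> norm (y - s0) < d \<Longrightarrow> norm (u y - u s0) < u s0"
        unfolding isCont_def LIM_eq using pos by blast
      have "norm (u (s0 + d/2) - u s0) < u s0" using d by auto
      then have "u (s0 + d/2) > 0" by (simp add: abs_less_iff)
      then have "s0 + d/2 \<in> S" unfolding S_def by simp
      then have "s0 + d/2 \<le> s0" unfolding s0_def using Sba by (rule cSup_upper)
      then show False using d by simp
    qed
    have "isCont u s0" using uC by (simp add: continuous_on_eq_continuous_at)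
    then obtain d1 where d1: "d1 > 0" "\<And>y. y \<noteq> s0 \<and> norm (y - s0) < d1 \<Longrightarrow> norm (u y - u s0) < \<delta>0"
      unfolding isCont_def LIM_eq using d0 by blast
    define e1 where "e1 = min (d1/2) (1/2)"
    have e1: "e1 > 0" "e1 \<le> 1/2" "e1 < d1" using d1 unfolding e1_def by auto
    define t where "t = s0 + 1/2 - e1"
    have ut: "u (t - 1/2) < \<delta>0" using d1(2)[of "t - 1/2"] e1 us0 unfolding t_def by auto
    have ut0: "u (t - 1/2) > 0" using below e1 unfolding t_def by simp
    have At0: "avgA u t > 0"
      by (rule av_pos[OF uC, of t "t - 1/2"]) (use u0 ut0 in auto)
    have At1: "avgA u t \<le> \<delta>0" using Au_le[of t] ut by simp
    have "\<bar>h t - lam * avgA u t\<bar> \<le> (lam/2) * avgA u t"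
      unfolding h_eq using d0(2)[of "avgA u t"] At0 At1 by simp
    moreover have "lam * avgA u t > 0" using At0 lam0 by simp
    ultimately have ht: "h t > 0" unfolding abs_le_iff by linarith
    have "avgA h s0 > 0"
      by (rule av_pos[OF hC, of s0 t]) (use h0 ht e1 in \<open>auto simp: t_def\<close>)
    then show False using u_eq[of s0] us0 by simp
  qed
  have G: "\<exists>R\<ge>1. \<forall>\<phi>\<ge>R+1. (lam - e) * avgA (avgA u) \<phi> \<le> u \<phi> \<and> u \<phi> \<le> (lam + e) * avgA (avgA u) \<phi>"
    if e: "e > 0" for e
  proof -
    obtain \<delta> where d: "\<delta> > 0" "\<And>x. 0 \<le> x \<Longrightarrow> x \<le> \<delta> \<Longrightarrow> \<bar>(1 - Phi' (1-x)) - lam*x\<bar> \<le> e*x"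
      using deriv_bound[OF dlam P1 e] by auto
    have "eventually (\<lambda>x. u x < \<delta>) at_top" using order_tendstoD(2)[OF utop] d by simp
    then obtain R0 where R0: "\<And>x. x \<ge> R0 \<Longrightarrow> u x < \<delta>" by (auto simp: eventually_at_top_linorder)
    define R where "R = max R0 1"
    have cm: "continuous_on UNIV (\<lambda>s. c * avgA u s)" for c by (intro continuous_intros AuC)
    have "(lam - e) * avgA (avgA u) \<phi> \<le> u \<phi> \<and> u \<phi> \<le> (lam + e) * avgA (avgA u) \<phi>" if ph: "\<phi> \<ge> R+1" for \<phi>
    proof -
      have hb: "(lam - e) * avgA u s \<le> h s \<and> h s \<le> (lam + e) * avgA u s" if s: "s \<in> {\<phi>-1/2..\<phi>+1/2}" for s
      proof -
        have "s - 1/2 \<ge> R0" using s ph R_def by auto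
        then have "avgA u s \<le> \<delta>" using Au_le[of s] R0[of "s - 1/2"] by simp
        then have "\<bar>h s - lam * avgA u s\<bar> \<le> e * avgA u s" unfolding h_eq using d(2) Au_ge[of s] by simp
        then show ?thesis unfolding abs_le_iff by (simp add: algebra_simps)
      qed
      have "avgA (\<lambda>s. (lam - e) * avgA u s) \<phi> \<le> avgA h \<phi>"
        by (rule av_le) (use cont_int[OF cm] cont_int[OF hC] hb in auto)
      moreover have "avgA h \<phi> \<le> avgA (\<lambda>s. (lam + e) * avgA u s) \<phi>"
        by (rule av_le) (use cont_int[OF cm] cont_int[OF hC] hb in auto)
      ultimately show ?thesis unfolding av_cmult u_eq by simp
    qed
    then show ?thesis using R_def by (intro exI[of _ R]) auto
  qed
  have kt: "lam * (kap tau_plus)^2 = 1"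
  proof -
    have a: "(kap tau_plus)^2 * tau_plus^2 = 2*(cosh tau_plus - 1)"
      using kap_sq[of tau_plus] tau_pos by simp
    have "(lam * (kap tau_plus)^2) * tau_plus^2 = lam * ((kap tau_plus)^2 * tau_plus^2)"
      by (simp only: mult.assoc)
    also have "\<dots> = lam * (2*(cosh tau_plus - 1))" by (simp only: a)
    also have "\<dots> = 2 * lam * (cosh tau_plus - 1)" by (simp only: ac_simps)
    also have "\<dots> = 1 * tau_plus^2" using tau_eq by simp
    finally have "(lam * (kap tau_plus)^2) * tau_plus^2 = 1 * tau_plus^2" .
    then show ?thesis using tau_pos by (metis mult_right_cancel power_not_zero less_irrefl)
  qed
  have expz: "((\<lambda>x. exp (- t * x)) \<longlongrightarrow> 0) at_top" if "t > 0" for t :: real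
    using that by real_asymp
  define t1 where "t1 = max tau_lo (tau_plus/2)"
  have t1: "0 < t1" "t1 < tau_plus" "tau_lo \<le> t1" using taus tau_pos unfolding t1_def by auto
  define K1 where "K1 = (kap t1)^2"
  have K1p: "K1 > 0" unfolding K1_def using kap_pos[OF t1(1)] by simp
  have "kap t1 < kap tau_plus" using kap_mono t1 by blast
  then have "K1 < (kap tau_plus)^2" unfolding K1_def using kap_pos[OF t1(1)] by (simp add: power_strict_mono)
  then have q1: "lam * K1 < 1" using kt lam0 by (metis mult_strict_left_mono)
  define e1 where "e1 = min ((1 - lam*K1)/(2*K1)) ((1-lam)/2)"
  have e1p: "e1 > 0" using q1 K1p lam1 unfolding e1_def by auto
  define th1 where "th1 = lam + e1"
  have "e1 \<le> (1-lam)/2" unfolding e1_def by (rule min.cobounded2)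
  then have th1: "0 \<le> th1" "th1 < 1" using e1p lam0 lam1 unfolding th1_def by auto
  have "e1 * K1 \<le> (1 - lam*K1)/2"
  proof -
    have "e1 \<le> (1 - lam*K1)/(2*K1)" unfolding e1_def by (rule min.cobounded1)
    then have "e1 * K1 \<le> (1 - lam*K1)/(2*K1) * K1" using K1p by (intro mult_right_mono) auto
    also have "\<dots> = (1 - lam*K1)/2" using K1p by simp
    finally show ?thesis .
  qed
  then have th1K: "th1 * K1 \<le> 1" using q1 unfolding th1_def by (simp add: algebra_simps)
  obtain R1 where R1: "R1 \<ge> 1" "\<And>\<phi>. \<phi> \<ge> R1+1 \<Longrightarrow> u \<phi> \<le> th1 * avgA (avgA u) \<phi>"
    using G[OF e1p] unfolding th1_def by auto
  define C where "C = 2 * exp (t1 * (R1+1))"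
  have Cp: "C > 0" unfolding C_def by simp
  have Cb: "2 \<le> C * exp (- t1 * \<phi>)" if "\<phi> \<le> R1+1" for \<phi>
  proof -
    have "C * exp (- t1 * \<phi>) = 2 * exp (t1 * (R1 + 1 - \<phi>))" unfolding C_def
      by (simp add: exp_add[symmetric] algebra_simps)
    moreover have "t1 * (R1 + 1 - \<phi>) \<ge> 0" using t1 that by simp
    ultimately show ?thesis by simp
  qed
  have upper1: "u \<phi> \<le> C * exp (- t1 * \<phi>) + \<eta>" if eta: "\<eta> > 0" and ph: "\<phi> \<ge> R1-1" for \<phi> \<eta>
  proof -
    define z where "z \<phi> = u \<phi> - (C * exp (- t1 * \<phi>) + \<eta>)" for \<phi>
    have zc: "continuous_on UNIV z" unfolding z_def[abs_def] by (intro continuous_intros uC)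
    have "(z \<longlongrightarrow> 0 - (C * 0 + \<eta>)) at_top"
      unfolding z_def[abs_def] by (intro tendsto_intros utop expz t1)
    then have zl: "(z \<longlongrightarrow> -\<eta>) at_top" by simp
    have Sc: "continuous_on UNIV (\<lambda>s. C * exp (- t1 * s) + \<eta>)" by (intro continuous_intros)
    have Az: "avgA z = (\<lambda>s. avgA u s - ((C * kap t1) * exp (- t1 * s) + \<eta>))"
    proof
      fix s show "avgA z s = avgA u s - ((C * kap t1) * exp (- t1 * s) + \<eta>)"
        unfolding z_def[abs_def] using av_diff[OF uC Sc, of s] av_S[of t1 C \<eta> s] t1 by simp
    qed
    have Sc2: "continuous_on UNIV (\<lambda>s. (C * kap t1) * exp (- t1 * s) + \<eta>)" by (intro continuous_intros)
    have AAz: "avgA (avgA z) \<phi> = avgA (avgA u) \<phi> - ((C * kap t1 * kap t1) * exp (- t1 * \<phi>) + \<eta>)" for \<phi>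
      unfolding Az using av_diff[OF AuC Sc2, of \<phi>] av_S[of t1 "C * kap t1" \<eta> \<phi>] t1 by simp
    show ?thesis
    proof -
      have "z \<phi> \<le> 0"
      proof (rule mp[OF zc zl _ th1, of R1])
        show "-\<eta> \<le> 0" using eta by simp
        show "z x \<le> 0" if "x \<in> {R1-1..R1+1}" for x
          using Cb[of x] u2[of x] eta that unfolding z_def by auto
        show "R1 - 1 \<le> \<phi>" using ph .
        fix x assume x: "x \<ge> R1+1"
        define E where "E = exp (- t1 * x)"
        have E0: "E \<ge> 0" unfolding E_def by simp
        have "th1 * (K1 * (C * E)) \<le> 1 * (C * E)"
          using th1K Cp E0 by (metis mult.assoc mult_right_mono mult_nonneg_nonneg less_imp_le)
        moreover have "th1 * \<eta> \<le> \<eta>" using th1 eta by simp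
        moreover have "z x \<le> th1 * avgA (avgA u) x - (C * E + \<eta>)" using R1(2)[OF x] unfolding z_def E_def by simp
        ultimately show "z x \<le> th1 * avgA (avgA z) x"
          unfolding AAz E_def[symmetric] K1_def by (simp add: power2_eq_square algebra_simps)
      qed
      then show ?thesis unfolding z_def by simp
    qed
  qed
  have upper: "u \<phi> \<le> C * exp (- tau_lo * \<phi>)" if ph: "\<phi> \<ge> 0" for \<phi>
  proof -
    have "u \<phi> \<le> C * exp (- t1 * \<phi>)"
    proof (cases "\<phi> \<ge> R1 - 1")
      case True then show ?thesis using upper1 field_le_epsilon by blast
    next
      case False then show ?thesis using Cb[of \<phi>] u2[of \<phi>] by simp
    qed
    also have "\<dots> \<le> C * exp (- tau_lo * \<phi>)" using t1 ph Cp by (simp add: mult_right_mono)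
    finally show ?thesis .
  qed
  define t2 where "t2 = tau_hi"
  have t2: "0 < t2" "tau_plus < t2" using taus tau_pos unfolding t2_def by auto
  define K2 where "K2 = (kap t2)^2"
  have K2p: "K2 > 0" unfolding K2_def using kap_pos[OF t2(1)] by simp
  have "kap tau_plus < kap t2" using kap_mono t2 tau_pos by blast
  then have "(kap tau_plus)^2 < K2" unfolding K2_def using kap_pos[OF tau_pos] by (simp add: power_strict_mono)
  then have q2: "1 < lam * K2" using kt lam0 by (metis mult_strict_left_mono)
  define e2 where "e2 = min ((lam*K2 - 1)/(2*K2)) (lam/2)"
  have e2p: "e2 > 0" using q2 K2p lam0 unfolding e2_def by auto
  define th2 where "th2 = lam - e2"
  have "e2 \<le> lam/2" unfolding e2_def by (rule min.cobounded2)
  then have th2: "0 \<le> th2" "th2 < 1" using e2p lam0 lam1 unfolding th2_def by auto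
  have "e2 * K2 \<le> (lam*K2 - 1)/2"
  proof -
    have "e2 \<le> (lam*K2 - 1)/(2*K2)" unfolding e2_def by (rule min.cobounded1)
    then have "e2 * K2 \<le> (lam*K2 - 1)/(2*K2) * K2" using K2p by (intro mult_right_mono) auto
    also have "\<dots> = (lam*K2 - 1)/2" using K2p by simp
    finally show ?thesis .
  qed
  then have th2K: "1 \<le> th2 * K2" using q2 unfolding th2_def by (simp add: algebra_simps)
  obtain R2 where R2: "R2 \<ge> 1" "\<And>\<phi>. \<phi> \<ge> R2+1 \<Longrightarrow> th2 * avgA (avgA u) \<phi> \<le> u \<phi>"
    using G[OF e2p] unfolding th2_def by auto
  define c where "c = u (R2+1)"
  have cp: "c > 0" unfolding c_def using upos by simp
  have cb: "c * exp (- t2 * \<phi>) \<le> u \<phi>" if "0 \<le> \<phi>" "\<phi> \<le> R2+1" for \<phi>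
  proof -
    have "exp (- t2 * \<phi>) \<le> 1" using t2 that by simp
    then have "c * exp (- t2 * \<phi>) \<le> c" using cp by (simp add: mult_left_le)
    also have "c \<le> u \<phi>" unfolding c_def using udec that by simp
    finally show ?thesis .
  qed
  have lower1: "c * exp (- t2 * \<phi>) \<le> u \<phi>" if ph: "\<phi> \<ge> R2-1" for \<phi>
  proof -
    define z where "z \<phi> = c * exp (- t2 * \<phi>) - u \<phi>" for \<phi>
    have zc: "continuous_on UNIV z" unfolding z_def[abs_def] by (intro continuous_intros uC)
    have "(z \<longlongrightarrow> c * 0 - 0) at_top"
      unfolding z_def[abs_def] by (intro tendsto_intros utop expz t2)
    then have zl: "(z \<longlongrightarrow> 0) at_top" by simp
    have Ec: "continuous_on UNIV (\<lambda>s. c * exp (- t2 * s))" by (intro continuous_intros)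
    have Az: "avgA z = (\<lambda>s. (c * kap t2) * exp (- t2 * s) - avgA u s)"
    proof
      fix s show "avgA z s = (c * kap t2) * exp (- t2 * s) - avgA u s"
        unfolding z_def[abs_def] using av_diff[OF Ec uC, of s] av_cmult[of c "\<lambda>s. exp (- t2 * s)" s] av_exp[of t2 s] t2 by simp
    qed
    have Ec2: "continuous_on UNIV (\<lambda>s. (c * kap t2) * exp (- t2 * s))" by (intro continuous_intros)
    have AAz: "avgA (avgA z) \<phi> = (c * kap t2 * kap t2) * exp (- t2 * \<phi>) - avgA (avgA u) \<phi>" for \<phi>
      unfolding Az using av_diff[OF Ec2 AuC, of \<phi>] av_cmult[of "c * kap t2" "\<lambda>s. exp (- t2 * s)" \<phi>] av_exp[of t2 \<phi>] t2 by simp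
    have "z \<phi> \<le> 0"
    proof (rule mp[OF zc zl _ th2, of R2])
      show "(0::real) \<le> 0" by simp
      show "z x \<le> 0" if "x \<in> {R2-1..R2+1}" for x
        using cb[of x] R2(1) that unfolding z_def by auto
      show "R2 - 1 \<le> \<phi>" using ph .
      fix x assume x: "x \<ge> R2+1"
      define E where "E = exp (- t2 * x)"
      have E0: "E \<ge> 0" unfolding E_def by simp
      have "1 * (c * E) \<le> (th2 * K2) * (c * E)"
        using th2K cp E0 by (intro mult_right_mono) auto
      moreover have "z x \<le> c * E - th2 * avgA (avgA u) x" using R2(2)[OF x] unfolding z_def E_def by simp
      ultimately show "z x \<le> th2 * avgA (avgA z) x"
        unfolding AAz E_def[symmetric] K2_def by (simp add: power2_eq_square algebra_simps)
    qed
    then show ?thesis unfolding z_def by simp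
  qed
  have lower: "c * exp (- tau_hi * \<phi>) \<le> u \<phi>" if ph: "\<phi> \<ge> 0" for \<phi>
  proof (cases "\<phi> \<ge> R2 - 1")
    case True then show ?thesis using lower1 t2_def by blast
  next
    case False then show ?thesis using cb[of \<phi>] ph t2_def by simp
  qed
  have Wu: "Wsh \<phi> - W \<phi> = u \<phi>" if "\<phi> \<ge> 0" for \<phi> unfolding Wsh_def u_def using that by simp
  show ?thesis
    using cp Cp lower upper Wu by (intro exI[of _ c] exI[of _ C]) auto
qed

end
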